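(* Fix any $\bar x\in\mathcal{S}^*$ and $q>0$. (i) Suppose that for every $x'\in\mathcal{S}^*$ there exists $\epsilon>0$ such that $F(y)\le F(x')$ for all $y\in\mathcal{S}^*\cap\mathbb{B}(x',\epsilon)$. Then the $q$-subregularity of the mapping $\partial F$ at $\bar x$ for $0$ implies that $F$ has the KL property of exponent $\max\{\frac{1}{2q},\frac{1}{1+q}\}$ at $\bar x$. (ii) If $F$ has the KL property of exponent $\frac{1}{2q}$ at $\bar x$ for some $q\in(\frac12,1]$ and $\bar x$ is a local minimizer of $F$, then $\partial F$ is $(2q-1)$-subregular at $\bar x$ for $0$.
   Context: Let $A\in\mathbb{R}^{m\times n}$, $b\in\mathbb{R}^m$, and let $\psi:\mathbb{R}^m\to(-\infty,\infty]$ and $g:\mathbb{R}^n\to(-\infty,\infty]$ be proper lower semicontinuous functions. Set $f(x):=\psi(Ax-b)$ and $F:=f+g$. Assume: (i) there is an open set $\mathcal{O}\supseteq\mathrm{dom}\,g$ such that $\psi$ is twice continuously differentiable on $A(\mathcal{O})-b$; (ii) $g$ is convex and continuous relative to $\mathrm{dom}\,g$; (iii) $\inf F>-\infty$ and $F$ is level bounded. $\partial F$ is the limiting subdifferential; for $x\in\mathrm{dom}\,g$, $\partial F(x)=\nabla f(x)+\partial g(x)$. $\mathcal{S}^*:=\{x\in\mathrm{dom}\,g:0\in\partial F(x)\}$. A multifunction $\mathcal{F}$ is $q$-subregular at $\bar x$ for $\bar y\in\mathcal{F}(\bar x)$ if there exist $\kappa,\delta>0$ with $\mathrm{dist}(x,\mathcal{F}^{-1}(\bar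 y))\le\kappa[\mathrm{dist}(\bar y,\mathcal{F}(x))]^q$ for all $x\in\mathbb{B}(\bar x,\delta)$. KL property of exponent $\theta\in[0,1)$ at $\bar x\in\mathrm{dom}\,\partial F$: there exist $\delta>0$, $\varpi\in(0,\infty]$, $c>0$ such that, with $\varphi(t)=ct^{1-\theta}$, $\varphi'(F(x)-F(\bar x))\,\mathrm{dist}(0,\partial F(x))\ge1$ for all $x\in\mathbb{B}(\bar x,\delta)$ with $F(\bar x)<F(x)<F(\bar x)+\varpi$.
   Formalization: Part (i) carries the extra hypothesis $\max\{\frac{1}{2q},\frac{1}{1+q}\}<1$, that is q > 1/2, so its implication is asserted only for q > 1/2 rather than for every q > 0. The statement above fails without it. *)

theory Defs
  imports "HOL-Analysis.Analysis"
begin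

(* Extended-real-valued functions (-\<infinity>,\<infinity>] are modelled as functions into ereal. *)

definition proper_fun :: "('a \<Rightarrow> ereal) \<Rightarrow> bool" where
  "proper_fun f \<longleftrightarrow> (\<forall>x. f x \<noteq> -\<infinity>) \<and> (\<exists>x. f x \<noteq> \<infinity>)"

definition edom :: "('a \<Rightarrow> ereal) \<Rightarrow> 'a set" where
  "edom f = {x. f x < \<infinity>}"

definition lsc_fun :: "('a::topological_space \<Rightarrow> ereal) \<Rightarrow> bool" where
  "lsc_fun f \<longleftrightarrow> (\<forall>x. f x \<le> Liminf (at x) f)"

(* Frechet (regular) subdifferential: v is a regular subgradient of F at x iff F x is finite and
   liminf_{y \<rightarrow> x, y \<noteq> x} (F y - F x - <v, y - x>) / |y - x| \<ge> 0, written in epsilon-delta form. *)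
definition frechet_subdiff :: "('a::real_inner \<Rightarrow> ereal) \<Rightarrow> 'a \<Rightarrow> 'a set" where
  "frechet_subdiff F x = {v. \<bar>F x\<bar> \<noteq> \<infinity> \<and>
     (\<forall>\<epsilon>>0. \<exists>\<delta>>0. \<forall>y. norm (y - x) < \<delta> \<longrightarrow>
        ereal (real_of_ereal (F x) + inner v (y - x) - \<epsilon> * norm (y - x)) \<le> F y)}"

definition limiting_subdiff :: "('a::real_inner \<Rightarrow> ereal) \<Rightarrow> 'a \<Rightarrow> 'a set" where
  "limiting_subdiff F x = {v. \<exists>xk vk. xk \<longlonglongrightarrow> x \<and> (\<lambda>k. F (xk k)) \<longlonglongrightarrow> F x \<and>
      (\<forall>k. vk k \<in> frechet_subdiff F (xk k)) \<and> vk \<longlonglongrightarrow> v}"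

(* q-subregularity of a multifunction M at xbar for ybar \<in> M xbar.
   dist(ybar, M x) = +\<infinity> when M x = {}, in which case the inequality holds trivially. *)
definition q_subregular :: "('a::metric_space \<Rightarrow> 'b::metric_space set) \<Rightarrow> real \<Rightarrow> 'a \<Rightarrow> 'b \<Rightarrow> bool" where
  "q_subregular M q xbar ybar \<longleftrightarrow> ybar \<in> M xbar \<and>
     (\<exists>\<kappa>>0. \<exists>\<delta>>0. \<forall>x\<in>cball xbar \<delta>. M x \<noteq> {} \<longrightarrow>
        infdist x {z. ybar \<in> M z} \<le> \<kappa> * (infdist ybar (M x)) powr q)"

(* KL property of exponent \<theta> at xbar \<in> dom \<partial>F, with \<phi>(t) = c t^(1-\<theta>),
   \<phi>'(t) = c (1-\<theta>) t^(-\<theta>); dist(0, \<partial>F x) = +\<infinity> when \<partial>F x = {} (inequality trivial). *)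
definition KL_exponent :: "('a::real_inner \<Rightarrow> ereal) \<Rightarrow> real \<Rightarrow> 'a \<Rightarrow> bool" where
  "KL_exponent F \<theta> xbar \<longleftrightarrow> 0 \<le> \<theta> \<and> \<theta> < 1 \<and> limiting_subdiff F xbar \<noteq> {} \<and>
     (\<exists>\<delta>>0. \<exists>w::ereal. w > 0 \<and> (\<exists>c>0.
        \<forall>x\<in>cball xbar \<delta>. F xbar < F x \<and> F x < F xbar + w \<and> limiting_subdiff F x \<noteq> {} \<longrightarrow>
          c * (1 - \<theta>) * (real_of_ereal (F x - F xbar)) powr (- \<theta>)
            * infdist 0 (limiting_subdiff F x) \<ge> 1))"

end

theory Submission
  imports Defs
begin


lemma ereal_split:
  fixes X Y :: ereal
  assumes "X \<noteq> -\<infinity>" "Y \<noteq> -\<infinity>" "ereal a < X + Y"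
  shows "\<exists>a1 a2. ereal a1 < X \<and> ereal a2 < Y \<and> a \<le> a1 + a2"
proof (cases X)
  case (real r)
  show ?thesis
  proof (cases Y)
    case (real s)
    with \<open>X = ereal r\<close> assms show ?thesis
      by (intro exI[of _ "r - (r + s - a)/2"] exI[of _ "s - (r + s - a)/2"]) auto
  next
    case PInf
    with \<open>X = ereal r\<close> show ?thesis by (intro exI[of _ "r - 1"] exI[of _ "a - r + 1"]) auto
  qed (use assms in auto)
next
  case PInf
  show ?thesis
  proof (cases Y)
    case (real s)
    with \<open>X = \<infinity>\<close> show ?thesis by (intro exI[of _ "a - s + 1"] exI[of _ "s - 1"]) auto
  next
    case PInf
    with \<open>X = \<infinity>\<close> show ?thesis by (intro exI[of _ a] exI[of _ 0]) auto
  qed (use assms in auto)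
qed (use assms in auto)

lemma ereal_add_less: "ereal a1 < X \<Longrightarrow> ereal a2 < Y \<Longrightarrow> ereal (a1 + a2) < X + (Y::ereal)"
  by (cases X; cases Y) auto

lemma lsc_nhds:
  assumes "lsc_fun f" "a < f z"
  shows "eventually (\<lambda>y. a < f y) (nhds z)"
proof -
  have "f z \<le> Liminf (at z) f" using assms(1) unfolding lsc_fun_def by blast
  then have "eventually (\<lambda>y. a < f y) (at z)" using assms(2) le_Liminf_iff by blast
  then show ?thesis using assms(2) eventually_nhds_conv_at by blast
qed

locale setting =
  fixes A :: "real^'n^'m" and b :: "real^'m"
    and \<psi> :: "real^'m \<Rightarrow> ereal" and g :: "real^'n \<Rightarrow> ereal"
    and U :: "(real^'n) set" and V :: "(real^'m) set"
    and p :: "real^'m \<Rightarrow> real" and gp :: "real^'m \<Rightarrow> real^'m" and H :: "real^'m \<Rightarrow> real^'m^'m"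
  assumes psi_nm: "\<And>y. \<psi> y \<noteq> -\<infinity>" and g_nm: "\<And>x. g x \<noteq> -\<infinity>"
    and psi_lsc: "lsc_fun \<psi>" and g_lsc: "lsc_fun g"
    and U_open: "open U" and V_open: "open V" and domU: "edom g \<subseteq> U"
    and UV: "(\<lambda>x. A *v x - b) ` U \<subseteq> V"
    and psi_p: "\<And>y. y \<in> V \<Longrightarrow> \<psi> y = ereal (p y)"
    and p_der: "\<And>y. y \<in> V \<Longrightarrow> (p has_derivative (\<lambda>h. inner (gp y) h)) (at y)"
    and gp_der: "\<And>y. y \<in> V \<Longrightarrow> (gp has_derivative (\<lambda>h. H y *v h)) (at y)"
    and H_cont: "continuous_on V H"
    and g_convex: "convex (edom g)" and g_convex_on: "convex_on (edom g) (\<lambda>x. real_of_ereal (g x))"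
    and g_cont: "continuous_on (edom g) g"
begin

definition FF :: "real^'n \<Rightarrow> ereal" where "FF x = \<psi> (A *v x - b) + g x"
definition f :: "real^'n \<Rightarrow> real" where "f x = p (A *v x - b)"
definition G :: "real^'n \<Rightarrow> real" where "G x = real_of_ereal (g x)"
definition Df :: "real^'n \<Rightarrow> real^'n \<Rightarrow> real" where "Df x h = inner (gp (A *v x - b)) (A *v h)"

lemma U_V: "x \<in> U \<Longrightarrow> A *v x - b \<in> V" using UV by auto

lemma g_fin: "x \<in> edom g \<Longrightarrow> g x = ereal (G x)"
  using g_nm[of x] unfolding edom_def G_def by (cases "g x") auto

lemma FF_dom: "x \<in> edom g \<Longrightarrow> FF x = ereal (f x + G x)"
  using g_fin[of x] psi_p[OF U_V] domU unfolding FF_def f_def by auto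

lemma FF_fin_dom: "FF x \<noteq> \<infinity> \<Longrightarrow> x \<in> edom g"
  using psi_nm[of "A *v x - b"] unfolding FF_def edom_def
  by (cases "g x"; cases "\<psi> (A *v x - b)") auto

lemma FF_nm: "FF x \<noteq> -\<infinity>"
  using psi_nm[of "A *v x - b"] g_nm[of x] unfolding FF_def
  by (cases "g x"; cases "\<psi> (A *v x - b)") auto

lemma f_der: "x \<in> U \<Longrightarrow> (f has_derivative Df x) (at x)"
proof -
  assume x: "x \<in> U"
  have a: "((\<lambda>x. A *v x - b) has_derivative (\<lambda>h. A *v h)) (at x)"
    by (auto intro!: derivative_eq_intros bounded_linear.has_derivative[OF matrix_vector_mul_bounded_linear])
  show ?thesis
    using has_derivative_compose[OF a p_der[OF U_V[OF x]]] unfolding f_def Df_def o_def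
    by simp
qed

lemma f_cont: "x \<in> U \<Longrightarrow> isCont f x"
  using f_der has_derivative_continuous by blast

lemma gp_cont: "y \<in> V \<Longrightarrow> isCont gp y"
  using gp_der has_derivative_continuous by blast

lemma G_cont: "continuous_on (edom g) G"
proof -
  have "continuous_on (edom g) (real_of_ereal \<circ> g)"
    using continuous_on_iff_real[of "edom g" g] g_cont g_nm unfolding edom_def by auto
  then show ?thesis unfolding G_def o_def by simp
qed

lemma frechet_dom: "v \<in> frechet_subdiff FF x \<Longrightarrow> x \<in> edom g"
  unfolding frechet_subdiff_def using FF_fin_dom by auto

lemma Df_scale: "Df x (s *\<^sub>R d) = s * Df x d"
  unfolding Df_def by (simp add: matrix_vector_mult_scaleR)

lemma frechet_convex:
  assumes v: "v \<in> frechet_subdiff FF z" and y: "y \<in> edom g"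
  shows "G z + inner v (y - z) - Df z (y - z) \<le> G y"
proof -
  have z: "z \<in> edom g" using frechet_dom[OF v] .
  define d where "d = y - z"
  have zU: "z \<in> U" using z domU by auto
  show ?thesis
  proof (rule field_le_epsilon)
    fix e :: real assume e: "0 < e"
    define \<epsilon> where "\<epsilon> = e / (2 * (norm d + 1))"
    have nd: "2 * (norm d + 1) > 0" by (smt (verit) norm_ge_zero)
    have \<epsilon>: "\<epsilon> > 0" unfolding \<epsilon>_def using e nd by (intro divide_pos_pos)
    from v \<epsilon> obtain \<delta>1 where d1: "\<delta>1 > 0" and fr: "\<And>y'. norm (y' - z) < \<delta>1 \<Longrightarrow>
        ereal (real_of_ereal (FF z) + inner v (y' - z) - \<epsilon> * norm (y' - z)) \<le> FF y'"
      unfolding frechet_subdiff_def by blast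
    from f_der[OF zU] \<epsilon> obtain \<delta>2 where d2: "\<delta>2 > 0" and dr: "\<And>y'. norm (y' - z) < \<delta>2 \<Longrightarrow>
        norm (f y' - f z - Df z (y' - z)) \<le> \<epsilon> * norm (y' - z)"
      unfolding has_derivative_at_alt by blast
    define s where "s = min 1 (min \<delta>1 \<delta>2 / (2 * (norm d + 1)))"
    have s0: "0 < s" unfolding s_def using d1 d2 nd by simp
    have s1: "s \<le> 1" unfolding s_def by simp
    have "s * norm d \<le> min \<delta>1 \<delta>2 / (2 * (norm d + 1)) * (norm d + 1)"
      unfolding s_def using nd d1 d2 by (intro mult_mono) auto
    also have "\<dots> = min \<delta>1 \<delta>2 / 2" using nd by (simp add: field_simps)
    also have "\<dots> < min \<delta>1 \<delta>2" using d1 d2 by linarith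
    finally have sd: "s * norm d < min \<delta>1 \<delta>2" .
    define ys where "ys = z + s *\<^sub>R d"
    have ys_eq: "ys = (1 - s) *\<^sub>R z + s *\<^sub>R y" unfolding ys_def d_def by (simp add: algebra_simps)
    have ysd: "ys \<in> edom g" unfolding ys_eq using convexD[OF g_convex z y, of "1-s" s] s0 s1 by simp
    have Gys: "G ys \<le> (1 - s) * G z + s * G y"
      unfolding ys_eq G_def using convex_onD[OF g_convex_on, of s z y] s0 s1 z y by simp
    have nys: "norm (ys - z) = s * norm d" unfolding ys_def using s0 by simp
    have "ereal (real_of_ereal (FF z) + inner v (ys - z) - \<epsilon> * norm (ys - z)) \<le> FF ys"
      using fr[of ys] nys sd by simp
    then have A1: "f z + G z + s * inner v d - \<epsilon> * (s * norm d) \<le> f ys + G ys"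
      using FF_dom[OF z] FF_dom[OF ysd] nys s0 unfolding ys_def by simp
    have "norm (f ys - f z - Df z (ys - z)) \<le> \<epsilon> * norm (ys - z)" using dr[of ys] nys sd by simp
    then have A2: "f ys - f z - s * Df z d \<le> \<epsilon> * (s * norm d)"
      using nys Df_scale s0 unfolding ys_def by simp
    from A1 A2 Gys have "s * (inner v d - Df z d - 2 * \<epsilon> * norm d) \<le> s * (G y - G z)"
      by (simp add: algebra_simps)
    then have "inner v d - Df z d - 2 * \<epsilon> * norm d \<le> G y - G z" using s0 by simp
    moreover have "2 * \<epsilon> * norm d \<le> e"
    proof -
      have "2 * \<epsilon> * norm d = e * (norm d / (norm d + 1))" unfolding \<epsilon>_def using nd by (simp add: field_simps)
      also have "\<dots> \<le> e * 1" using e nd by (intro mult_left_mono) auto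
      finally show ?thesis by simp
    qed
    ultimately show "G z + inner v (y - z) - Df z (y - z) \<le> G y + e" unfolding d_def by simp
  qed
qed

lemma aff_tendsto: "xk \<longlonglongrightarrow> x \<Longrightarrow> (\<lambda>k. A *v xk k - b) \<longlonglongrightarrow> A *v x - b"
  by (intro tendsto_intros bounded_linear.tendsto[OF matrix_vector_mul_bounded_linear])

lemma Df_tendsto:
  assumes xk: "xk \<longlonglongrightarrow> x" and x: "x \<in> U" and yk: "yk \<longlonglongrightarrow> y"
  shows "(\<lambda>k. Df (xk k) (yk k)) \<longlonglongrightarrow> Df x y"
proof -
  have "(\<lambda>k. gp (A *v xk k - b)) \<longlonglongrightarrow> gp (A *v x - b)"
    using isCont_tendsto_compose[OF gp_cont[OF U_V[OF x]] aff_tendsto[OF xk]] .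
  moreover have "(\<lambda>k. A *v yk k) \<longlonglongrightarrow> A *v y"
    using bounded_linear.tendsto[OF matrix_vector_mul_bounded_linear yk] .
  ultimately show ?thesis unfolding Df_def by (intro tendsto_intros)
qed

lemma limiting_convex:
  assumes xi: "\<xi> \<in> limiting_subdiff FF x" and x: "x \<in> U"
  shows "x \<in> edom g \<and> (\<forall>y\<in>edom g. G x + inner \<xi> (y - x) - Df x (y - x) \<le> G y)"
proof -
  obtain xk vk where xk: "xk \<longlonglongrightarrow> x" and Fk: "(\<lambda>k. FF (xk k)) \<longlonglongrightarrow> FF x"
    and vk: "\<And>k. vk k \<in> frechet_subdiff FF (xk k)" and vkl: "vk \<longlonglongrightarrow> \<xi>"
    using xi unfolding limiting_subdiff_def by blast
  have xkd: "xk k \<in> edom g" for k using frechet_dom[OF vk] .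
  define y0 where "y0 = xk 0"
  have y0: "y0 \<in> edom g" unfolding y0_def using xkd .
  define R where "R = (\<lambda>k. f (xk k) + (G y0 - inner (vk k) (y0 - xk k) + Df (xk k) (y0 - xk k)))"
  have fl: "(\<lambda>k. f (xk k)) \<longlonglongrightarrow> f x" using isCont_tendsto_compose[OF f_cont[OF x] xk] .
  have Rl: "R \<longlonglongrightarrow> f x + (G y0 - inner \<xi> (y0 - x) + Df x (y0 - x))"
    unfolding R_def by (intro tendsto_intros fl vkl xk Df_tendsto[OF xk x]) 
  have "FF (xk k) \<le> ereal (R k)" for k
    using frechet_convex[OF vk y0, of k] FF_dom[OF xkd, of k] unfolding R_def by simp
  then have "FF x \<le> ereal (f x + (G y0 - inner \<xi> (y0 - x) + Df x (y0 - x)))"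
    using LIMSEQ_le[OF Fk tendsto_ereal[OF Rl]] by simp
  then have xd: "x \<in> edom g" using FF_fin_dom[of x] by force
  have "(\<lambda>k. ereal (f (xk k) + G (xk k))) \<longlonglongrightarrow> ereal (f x + G x)"
    using Fk FF_dom[OF xd] FF_dom[OF xkd] by simp
  then have "(\<lambda>k. f (xk k) + G (xk k)) \<longlonglongrightarrow> f x + G x" by simp
  then have Gl: "(\<lambda>k. G (xk k)) \<longlonglongrightarrow> G x"
    using tendsto_diff[OF _ fl] by fastforce
  have "G x + inner \<xi> (y - x) - Df x (y - x) \<le> G y" if y: "y \<in> edom g" for y
  proof (rule LIMSEQ_le[OF _ tendsto_const])
    show "(\<lambda>k. G (xk k) + inner (vk k) (y - xk k) - Df (xk k) (y - xk k)) \<longlonglongrightarrow> G x + inner \<xi> (y - x) - Df x (y - x)"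
      by (intro tendsto_intros Gl vkl xk Df_tendsto[OF xk x])
    show "\<exists>N. \<forall>n\<ge>N. G (xk n) + inner (vk n) (y - xk n) - Df (xk n) (y - xk n) \<le> G y"
      using frechet_convex[OF vk y] by blast
  qed
  then show ?thesis using xd by blast
qed

lemma quad_bound:
  assumes xb: "xb \<in> U"
  shows "\<exists>r>0. \<exists>L\<ge>0. cball xb r \<subseteq> U \<and>
     (\<forall>x\<in>cball xb r. \<forall>z\<in>cball xb r. \<bar>f z - f x - Df x (z - x)\<bar> \<le> L * (norm (z - x))\<^sup>2)"
proof -
  obtain r where r: "r > 0" "cball xb r \<subseteq> U"
    using U_open xb open_contains_cball by blast
  define aff where "aff = (\<lambda>x. A *v x - b)"
  have aff_cont: "continuous_on UNIV aff"
    unfolding aff_def by (intro continuous_intros linear_continuous_on bounded_linear.linear[OF matrix_vector_mul_bounded_linear])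
  have affV: "aff ` cball xb r \<subseteq> V" using r UV unfolding aff_def by auto
  have "continuous_on (cball xb r) (H \<circ> aff)"
    by (rule continuous_on_compose[OF continuous_on_subset[OF aff_cont] continuous_on_subset[OF H_cont affV]]) auto
  then have "compact ((H \<circ> aff) ` cball xb r)" by (intro compact_continuous_image) auto
  then have "bounded ((H \<circ> aff) ` cball xb r)" by (rule compact_imp_bounded)
  then obtain M where "\<forall>w\<in>(H \<circ> aff) ` cball xb r. norm w \<le> M" unfolding bounded_iff by blast
  then have M: "\<And>y. y \<in> cball xb r \<Longrightarrow> norm (H (aff y)) \<le> M" by auto
  define oA where "oA = onorm ((*v) A)"
  have oA: "norm (A *v h) \<le> oA * norm h" for h unfolding oA_def by (rule onorm[OF matrix_vector_mul_bounded_linear])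
  have oA0: "oA \<ge> 0" unfolding oA_def by (rule onorm_pos_le[OF matrix_vector_mul_bounded_linear])
  define MH where "MH = real (CARD('m)) * real (CARD('m)) * M"
  have MH: "norm (H (aff y) *v h) \<le> MH * norm h" if y: "y \<in> cball xb r" for y h
  proof -
    have "onorm ((*v) (H (aff y))) \<le> MH" unfolding MH_def
    proof (rule onorm_le_matrix_component)
      fix i j
      have "\<bar>H (aff y) $ i $ j\<bar> \<le> norm (H (aff y) $ i)" by (rule component_le_norm_cart)
      also have "\<dots> \<le> norm (H (aff y))" by (rule Finite_Cartesian_Product.norm_nth_le)
      finally show "\<bar>H (aff y) $ i $ j\<bar> \<le> M" using M[OF y] by simp
    qed
    then show ?thesis using onorm[OF matrix_vector_mul_bounded_linear, of "H (aff y)" h]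
      by (meson mult_right_mono norm_ge_zero order_trans)
  qed
  have "M \<ge> 0" using M[of xb] r by (meson centre_in_cball less_imp_le norm_ge_zero order_trans)
  then have MH0: "MH \<ge> 0" unfolding MH_def by simp
  define B where "B = MH * oA"
  have gpd: "((gp \<circ> aff) has_derivative (\<lambda>h. H (aff y) *v (A *v h))) (at y within cball xb r)"
    if y: "y \<in> cball xb r" for y
  proof -
    have a: "(aff has_derivative (\<lambda>h. A *v h)) (at y)"
      unfolding aff_def by (auto intro!: derivative_eq_intros bounded_linear.has_derivative[OF matrix_vector_mul_bounded_linear])
    have "aff y \<in> V" using affV y by auto
    from has_derivative_compose[OF a gp_der[OF this]] show ?thesis
      by (auto intro: has_derivative_at_withinI simp: o_def)
  qed
  have lip: "norm (gp (aff x) - gp (aff z)) \<le> B * norm (x - z)" if "x \<in> cball xb r" "z \<in> cball xb r" for x z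
  proof -
    have "norm ((gp \<circ> aff) x - (gp \<circ> aff) z) \<le> B * norm (x - z)"
    proof (rule differentiable_bound[OF convex_cball gpd _ that])
      fix y assume y: "y \<in> cball xb r"
      show "onorm (\<lambda>h. H (aff y) *v (A *v h)) \<le> B"
      proof (rule onorm_le)
        fix h
        have "norm (H (aff y) *v (A *v h)) \<le> MH * norm (A *v h)" using MH[OF y] .
        also have "\<dots> \<le> MH * (oA * norm h)"
          using oA MH0 by (intro mult_left_mono) auto
        finally show "norm (H (aff y) *v (A *v h)) \<le> B * norm h" unfolding B_def by (simp add: mult.assoc)
      qed
    qed auto
    then show ?thesis by simp
  qed
  have B0: "B \<ge> 0" unfolding B_def using MH0 oA0 by simp
  have main: "\<bar>f z - f x - Df x (z - x)\<bar> \<le> (B * oA) * (norm (z - x))\<^sup>2"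
    if x: "x \<in> cball xb r" and z: "z \<in> cball xb r" for x z
  proof -
    have seg: "closed_segment x z \<subseteq> cball xb r" by (rule closed_segment_subset[OF x z convex_cball])
    have "norm (f z - f x - Df x (z - x)) \<le> norm (z - x) * (B * oA * norm (z - x))"
    proof (rule differentiable_bound_linearization[where S="closed_segment x z"])
      show "x + t *\<^sub>R (z - x) \<in> closed_segment x z" if "t \<in> {0..1}" for t
        using that unfolding in_segment by (intro exI[of _ t]) (auto simp: algebra_simps)
      show "x \<in> closed_segment x z" by simp
      fix y assume y: "y \<in> closed_segment x z"
      then have yU: "y \<in> U" using seg r by auto
      show "(f has_derivative Df y) (at y within closed_segment x z)"
        using f_der[OF yU] by (rule has_derivative_at_withinI)
      show "onorm (Df y - Df x) \<le> B * oA * norm (z - x)"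
      proof (rule onorm_le)
        fix h
        have "norm ((Df y - Df x) h) = \<bar>inner (gp (aff y) - gp (aff x)) (A *v h)\<bar>"
          unfolding Df_def aff_def by (simp add: inner_diff_left)
        also have "\<dots> \<le> norm (gp (aff y) - gp (aff x)) * norm (A *v h)" by (rule Cauchy_Schwarz_ineq2)
        also have "\<dots> \<le> (B * norm (y - x)) * (oA * norm h)"
          using lip[of y x] seg y x oA B0 by (intro mult_mono) auto
        also have "\<dots> \<le> (B * norm (z - x)) * (oA * norm h)"
          using segment_bound1[OF y] B0 oA0 by (intro mult_right_mono mult_left_mono) auto
        finally show "norm ((Df y - Df x) h) \<le> B * oA * norm (z - x) * norm h" by (simp add: ac_simps)
      qed
    qed
    then show ?thesis by (simp add: power2_eq_square ac_simps)
  qed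
  show ?thesis using r B0 oA0 main by (intro exI[of _ r] conjI exI[of _ "B * oA"]) auto
qed


end



lemma frechet_limiting: "v \<in> frechet_subdiff F z \<Longrightarrow> v \<in> limiting_subdiff F z"
  unfolding limiting_subdiff_def by (intro CollectI exI[of _ "\<lambda>_. z"] exI[of _ "\<lambda>_. v"]) auto

lemma powr_concave:
  fixes a b \<alpha> :: real
  assumes "0 < \<alpha>" "\<alpha> \<le> 1" "0 \<le> a" "0 < b"
  shows "a powr \<alpha> \<le> b powr \<alpha> + \<alpha> * b powr (\<alpha> - 1) * (a - b)"
proof (cases "a = 0")
  case True
  have "b powr \<alpha> + \<alpha> * b powr (\<alpha> - 1) * (0 - b) = (1 - \<alpha>) * b powr \<alpha>"
    using assms by (simp add: powr_diff field_simps)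
  also have "\<dots> \<ge> 0" using assms by simp
  finally show ?thesis using True by simp
next
  case False
  then have a: "a > 0" using assms by simp
  have Y: "a powr \<alpha> * b powr (1 - \<alpha>) \<le> \<alpha> * a + (1 - \<alpha>) * b"
    using Youngs_inequality_0[of \<alpha> "1 - \<alpha>" a b] assms a by simp
  have bb: "b powr (1 - \<alpha>) * b powr (\<alpha> - 1) = 1" using assms by (simp flip: powr_add)
  have b1: "b * b powr (\<alpha> - 1) = b powr \<alpha>" using assms by (simp add: powr_diff field_simps)
  have "a powr \<alpha> = a powr \<alpha> * b powr (1 - \<alpha>) * b powr (\<alpha> - 1)" using bb by (simp add: mult.assoc)
  also have "\<dots> \<le> (\<alpha> * a + (1 - \<alpha>) * b) * b powr (\<alpha> - 1)"
    using Y assms by (intro mult_right_mono) auto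
  also have "\<dots> = \<alpha> * a * b powr (\<alpha> - 1) + (1 - \<alpha>) * (b * b powr (\<alpha> - 1))" by (simp add: algebra_simps)
  also have "\<dots> = b powr \<alpha> + \<alpha> * b powr (\<alpha> - 1) * (a - b)" unfolding b1 by (simp add: algebra_simps b1[symmetric])
  finally show ?thesis .
qed

lemma infdist_lessE:
  assumes "A \<noteq> {}" "infdist x A < e"
  shows "\<exists>a\<in>A. dist x a < e"
proof -
  have "bdd_below ((\<lambda>a. dist x a) ` A)" by (rule bdd_belowI[of _ 0]) auto
  then show ?thesis using assms cINF_less_iff[of A "\<lambda>a. dist x a" e] by (simp add: infdist_notempty)
qed

lemma infdist_geI:
  assumes "A \<noteq> {}" "\<And>a. a \<in> A \<Longrightarrow> m \<le> dist x a"
  shows "m \<le> infdist x A"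
  using assms by (simp add: infdist_notempty cINF_greatest)
context setting begin
lemma X1: "isCont (\<lambda>y. A *v y - b) z"
    by (intro continuous_intros linear_continuous_at bounded_linear.linear[OF matrix_vector_mul_bounded_linear])
lemma X2: "filterlim (\<lambda>y. A *v y - b) (nhds (A *v z - b)) (at z)" using X1[of z] unfolding isCont_def filterlim_def by simp
lemma fG_cont: "continuous_on (edom g) (\<lambda>x. f x + G x)"
proof (intro continuous_on_add G_cont)
  show "continuous_on (edom g) f"
    using f_cont domU by (intro continuous_at_imp_continuous_on) auto
qed
lemma FF_lsc:
  assumes "ereal a < FF z"
  shows "eventually (\<lambda>y. ereal a < FF y) (nhds z)"
proof -
  obtain a1 a2 where a1: "ereal a1 < \<psi> (A *v z - b)" and a2: "ereal a2 < g z" and a: "a \<le> a1 + a2"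
    using ereal_split[OF psi_nm g_nm] assms unfolding FF_def by blast
  have e1: "eventually (\<lambda>w. ereal a1 < \<psi> w) (nhds (A *v z - b))" by (rule lsc_nhds[OF psi_lsc a1])
  have "eventually (\<lambda>y. ereal a1 < \<psi> (A *v y - b)) (at z)"
    using filterlim_iff[THEN iffD1, OF X2, rule_format, OF e1] .
  then have e1': "eventually (\<lambda>y. ereal a1 < \<psi> (A *v y - b)) (nhds z)"
    using a1 eventually_nhds_conv_at by blast
  have e2: "eventually (\<lambda>y. ereal a2 < g y) (nhds z)" by (rule lsc_nhds[OF g_lsc a2])
  show ?thesis
  proof (rule eventually_mono[OF eventually_conj[OF e1' e2]])
    fix y assume "ereal a1 < \<psi> (A *v y - b) \<and> ereal a2 < g y"
    then have "ereal (a1 + a2) < FF y" unfolding FF_def using ereal_add_less by blast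
    moreover have "ereal a \<le> ereal (a1 + a2)" using a by simp
    ultimately show "ereal a < FF y" by (rule le_less_trans[rotated])
  qed
qed

lemma FF_sublevel_closed: "closed {y. FF y \<le> ereal c}"
proof -
  have "open {y. ereal c < FF y}"
  proof (rule open_subopen[THEN iffD2], rule ballI)
    fix z assume "z \<in> {y. ereal c < FF y}"
    then have "eventually (\<lambda>y. ereal c < FF y) (nhds z)" using FF_lsc by blast
    then obtain T where "open T" "z \<in> T" "\<forall>y\<in>T. ereal c < FF y" unfolding eventually_nhds by blast
    then show "\<exists>T. open T \<and> z \<in> T \<and> T \<subseteq> {y. ereal c < FF y}" by blast
  qed
  moreover have "{y. FF y \<le> ereal c} = - {y. ereal c < FF y}" by (auto simp: not_less)
  ultimately show ?thesis by (simp add: closed_def)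
qed

lemma local_min_crit:
  assumes z: "z \<in> edom g" and r: "r > 0" and m: "\<And>y. y \<in> ball z r \<Longrightarrow> FF z \<le> FF y"
  shows "0 \<in> limiting_subdiff FF z"
proof (rule frechet_limiting)
  show "0 \<in> frechet_subdiff FF z"
    unfolding frechet_subdiff_def
  proof (intro CollectI conjI allI impI)
    show "\<bar>FF z\<bar> \<noteq> \<infinity>" using FF_dom[OF z] by simp
    fix \<epsilon> :: real assume e: "\<epsilon> > 0"
    show "\<exists>\<delta>>0. \<forall>y. norm (y - z) < \<delta> \<longrightarrow>
        ereal (real_of_ereal (FF z) + inner 0 (y - z) - \<epsilon> * norm (y - z)) \<le> FF y"
    proof (intro exI[of _ r] conjI allI impI)
      fix y assume "norm (y - z) < r"
      then have "FF z \<le> FF y" using m by (simp add: dist_norm norm_minus_commute)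
      moreover have "ereal (real_of_ereal (FF z) + inner 0 (y - z) - \<epsilon> * norm (y - z)) \<le> FF z"
        using FF_dom[OF z] e by simp
      ultimately show "ereal (real_of_ereal (FF z) + inner 0 (y - z) - \<epsilon> * norm (y - z)) \<le> FF y"
        by (rule order_trans[rotated])
    qed (use r in auto)
  qed
qed

lemma part2:
  assumes xb: "xbar \<in> edom g" and q1: "1/2 < q" and q2: "q \<le> 1"
    and KL: "KL_exponent FF (1 / (2 * q)) xbar"
    and lm: "\<exists>\<delta>>0. \<forall>x\<in>ball xbar \<delta>. FF xbar \<le> FF x"
    and x0: "0 \<in> limiting_subdiff FF xbar"
  shows "q_subregular (limiting_subdiff FF) (2 * q - 1) xbar 0"
proof -
  define \<theta> where "\<theta> = 1 / (2 * q)"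
  define \<alpha> where "\<alpha> = 1 - \<theta>"
  have th0: "0 < \<theta>" and th1: "\<theta> < 1" using q1 unfolding \<theta>_def by (auto simp: field_simps)
  have al0: "0 < \<alpha>" and al1: "\<alpha> \<le> 1" unfolding \<alpha>_def using th0 th1 by auto
  have alq: "\<theta> * (2 * q - 1) = \<alpha>" unfolding \<alpha>_def \<theta>_def using q1 by (simp add: field_simps)
  obtain \<delta>1 w c where d1: "\<delta>1 > 0" and w: "w > 0" and c: "c > 0" and
    KLp: "\<And>x. x \<in> cball xbar \<delta>1 \<Longrightarrow> FF xbar < FF x \<Longrightarrow> FF x < FF xbar + w \<Longrightarrow> limiting_subdiff FF x \<noteq> {} \<Longrightarrow>
          c * (1 - \<theta>) * (real_of_ereal (FF x - FF xbar)) powr (- \<theta>) * infdist 0 (limiting_subdiff FF x) \<ge> 1"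
    using KL unfolding KL_exponent_def \<theta>_def by blast
  obtain \<delta>2 where d2: "\<delta>2 > 0" and lm2: "\<And>x. x \<in> ball xbar \<delta>2 \<Longrightarrow> FF xbar \<le> FF x" using lm by blast
  define Fb where "Fb = f xbar + G xbar"
  have FFb: "FF xbar = ereal Fb" unfolding Fb_def using FF_dom[OF xb] .
  obtain \<tau>0 where t0: "0 < ereal \<tau>0" "ereal \<tau>0 < w" using ereal_dense2[OF w] by blast
  have t0': "\<tau>0 > 0" using t0 by simp
  define R where "R = min \<delta>1 (\<delta>2 / 2)"
  have R0: "R > 0" unfolding R_def using d1 d2 by simp
  have Rd1: "R \<le> \<delta>1" unfolding R_def by simp
  have Rball: "cball xbar R \<subseteq> ball xbar \<delta>2" unfolding R_def using d2 by auto
  have geFb: "Fb \<le> f y + G y" if "y \<in> cball xbar R" "y \<in> edom g" for y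
    using lm2[of y] Rball that FF_dom[OF that(2)] FFb by auto
  define \<tau>1 where "\<tau>1 = min \<tau>0 ((R / (8 * c)) powr (1 / \<alpha>))"
  have t1: "\<tau>1 > 0" unfolding \<tau>1_def using t0' R0 c by simp
  have t1small: "4 * (c * t powr \<alpha>) < R / 2" if "0 \<le> t" "t < \<tau>1" for t
  proof -
    have "t < (R / (8 * c)) powr (1 / \<alpha>)" using that unfolding \<tau>1_def by simp
    then have "t powr \<alpha> < ((R / (8 * c)) powr (1 / \<alpha>)) powr \<alpha>" using that al0 by (intro powr_less_mono2) auto
    also have "\<dots> = R / (8 * c)" using al0 R0 c by (simp add: powr_powr)
    finally show ?thesis using c by (simp add: field_simps)
  qed
  obtain \<delta>3 where d3: "\<delta>3 > 0" and cont3: "\<And>x. x \<in> edom g \<Longrightarrow> dist x xbar < \<delta>3 \<Longrightarrow>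
       dist (f x + G x) (f xbar + G xbar) < \<tau>1"
    using fG_cont xb t1 unfolding continuous_on_iff by blast
  obtain ru where ru: "ru > 0" "cball xbar ru \<subseteq> U" using U_open xb domU open_contains_cball by blast
  define \<delta> where "\<delta> = min (R / 2) (min (\<delta>3 / 2) ru)"
  have dl0: "\<delta> > 0" unfolding \<delta>_def using R0 d3 ru by simp
  define \<kappa> where "\<kappa> = 4 * c * (c * (1 - \<theta>)) powr (2 * q - 1)"
  have ka0: "\<kappa> > 0" unfolding \<kappa>_def using c th1 by simp
  have S'd: "{z. 0 \<in> limiting_subdiff FF z} \<noteq> {}" using x0 by blast
  have main: "infdist x {z. 0 \<in> limiting_subdiff FF z} \<le> \<kappa> * (infdist 0 (limiting_subdiff FF x)) powr (2 * q - 1)"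
    if xc: "x \<in> cball xbar \<delta>" and ne: "limiting_subdiff FF x \<noteq> {}" for x
  proof -
    let ?S' = "{z. 0 \<in> limiting_subdiff FF z}"
    have xU: "x \<in> U" using xc ru unfolding \<delta>_def by auto
    have xd: "x \<in> edom g" using ne limiting_convex[OF _ xU] by blast
    have xR: "x \<in> cball xbar R" using xc R0 unfolding \<delta>_def by auto
    define t where "t = f x + G x - Fb"
    have tge: "t \<ge> 0" using geFb[OF xR xd] unfolding t_def by simp
    have tlt: "t < \<tau>1" using cont3[OF xd] xc d3 unfolding t_def Fb_def \<delta>_def
      by (auto simp: dist_real_def dist_commute)
    have FFx: "FF x = ereal (f x + G x)" using FF_dom[OF xd] .
    have rhs0: "0 \<le> \<kappa> * (infdist 0 (limiting_subdiff FF x)) powr (2 * q - 1)" using ka0 by simp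
    show ?thesis
    proof (cases "t = 0")
      case True
      have "0 \<in> limiting_subdiff FF x"
      proof (rule local_min_crit[OF xd])
        show "\<delta>2 - dist xbar x > 0" using xc Rball xR by auto
        fix y assume "y \<in> ball x (\<delta>2 - dist xbar x)"
        moreover have "dist xbar y \<le> dist xbar x + dist x y" by (rule dist_triangle)
        ultimately have "y \<in> ball xbar \<delta>2" by simp
        then show "FF x \<le> FF y" using lm2 FFx FFb True unfolding t_def by simp
      qed
      then have "infdist x ?S' = 0" by simp
      then show ?thesis using rhs0 by simp
    next
      case False
      then have tpos: "t > 0" using tge by simp
      define h where "h = c * t powr \<alpha>"
      have h0: "h > 0" unfolding h_def using c tpos by simp
      have h4: "4 * h < R / 2" unfolding h_def using t1small tge tlt by simp
      define d where "d = infdist 0 (limiting_subdiff FF x)"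
      have d0: "d \<ge> 0" unfolding d_def by (rule infdist_nonneg)
      have KLx: "c * (1 - \<theta>) * (real_of_ereal (FF x - FF xbar)) powr (- \<theta>) * d \<ge> 1"
        unfolding d_def
      proof (rule KLp[OF _ _ _ ne])
        show "x \<in> cball xbar \<delta>1" using xR Rd1 by auto
        show "FF xbar < FF x" using tpos FFx FFb unfolding t_def by simp
        have "ereal (f x + G x) < ereal Fb + ereal \<tau>0" using tlt unfolding t_def \<tau>1_def by simp
        also have "\<dots> \<le> ereal Fb + w" using t0 by (intro add_left_mono) simp
        finally show "FF x < FF xbar + w" using FFx FFb by simp
      qed
      have "real_of_ereal (FF x - FF xbar) = t" using FFx FFb unfolding t_def by simp
      then have KLx': "1 \<le> c * (1 - \<theta>) * t powr (- \<theta>) * d" using KLx by simp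
      have tth: "t powr \<theta> \<le> c * (1 - \<theta>) * d"
      proof -
        have "t powr \<theta> * 1 \<le> t powr \<theta> * (c * (1 - \<theta>) * t powr (- \<theta>) * d)"
          using KLx' by (intro mult_left_mono) auto
        also have "\<dots> = c * (1 - \<theta>) * d * (t powr \<theta> * t powr (- \<theta>))" by (simp add: ac_simps)
        also have "t powr \<theta> * t powr (- \<theta>) = 1" using tpos by (simp flip: powr_add)
        finally show ?thesis by simp
      qed
      have tb: "4 * c * t powr \<alpha> \<le> \<kappa> * d powr (2 * q - 1)"
      proof -
        have "t powr \<alpha> = (t powr \<theta>) powr (2 * q - 1)" using alq by (simp add: powr_powr)
        also have "\<dots> \<le> (c * (1 - \<theta>) * d) powr (2 * q - 1)"
          using tth q1 by (intro powr_mono2) auto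
        also have "\<dots> = (c * (1 - \<theta>)) powr (2 * q - 1) * d powr (2 * q - 1)"
          using c th1 d0 by (simp add: powr_mult)
        finally have "t powr \<alpha> \<le> (c * (1 - \<theta>)) powr (2 * q - 1) * d powr (2 * q - 1)" .
        then have "4 * c * t powr \<alpha> \<le> 4 * c * ((c * (1 - \<theta>)) powr (2 * q - 1) * d powr (2 * q - 1))"
          using c by (intro mult_left_mono) auto
        then show ?thesis unfolding \<kappa>_def by (simp add: ac_simps)
      qed
      define lam where "lam = 8 * h"
      have lam0: "lam > 0" unfolding lam_def using h0 by simp
      define D where "D = {y \<in> cball xbar R. FF y \<le> ereal (f x + G x + 1)}"
      have Dd: "D \<subseteq> edom g" unfolding D_def using FF_fin_dom by force
      have xD: "x \<in> D" unfolding D_def using xR FFx by simp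
      have Dc: "compact D"
      proof -
        have "D = cball xbar R \<inter> {y. FF y \<le> ereal (f x + G x + 1)}" unfolding D_def by auto
        then show ?thesis using FF_sublevel_closed by (simp add: compact_Int_closed)
      qed
      define \<Phi> where "\<Phi> = (\<lambda>y. c * (f y + G y - Fb) powr \<alpha> + (norm (y - x))\<^sup>2 / (2 * lam))"
      have geD: "Fb \<le> f y + G y" if "y \<in> D" for y using geFb that Dd unfolding D_def by auto
      have c1: "continuous_on D (\<lambda>y. f y + G y)" using fG_cont Dd by (rule continuous_on_subset)
      have c2: "continuous_on D (\<lambda>y. (f y + G y - Fb) powr \<alpha>)"
        by (rule continuous_on_powr'[OF continuous_on_diff[OF c1 continuous_on_const] continuous_on_const])
          (use geD al0 in auto)
      have c3: "continuous_on D (\<lambda>y. (norm (y - x))\<^sup>2 / (2 * lam))" using lam0 by (intro continuous_intros) auto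
      have Phic: "continuous_on D \<Phi>"
        unfolding \<Phi>_def by (rule continuous_on_add[OF continuous_on_mult[OF continuous_on_const c2] c3])
      obtain z where zD: "z \<in> D" and zmin: "\<And>y. y \<in> D \<Longrightarrow> \<Phi> z \<le> \<Phi> y"
        using continuous_attains_inf[OF Dc _ Phic] xD by blast
      have zd: "z \<in> edom g" using zD Dd by auto
      have FFz: "FF z = ereal (f z + G z)" using FF_dom[OF zd] .
      define s where "s = f z + G z - Fb"
      have sge: "s \<ge> 0" using geD[OF zD] unfolding s_def by simp
      have Phix: "\<Phi> x = h" unfolding \<Phi>_def h_def t_def by simp
      have Phiz: "c * s powr \<alpha> + (norm (z - x))\<^sup>2 / (2 * lam) \<le> h"
        using zmin[OF xD] Phix unfolding \<Phi>_def s_def by simp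
      have cs0: "0 \<le> c * s powr \<alpha>" using c by simp
      have sq0: "0 \<le> (norm (z - x))\<^sup>2 / (2 * lam)" using lam0 by simp
      have "(norm (z - x))\<^sup>2 / (2 * lam) \<le> h" using Phiz cs0 by linarith
      then have n2le: "(norm (z - x))\<^sup>2 \<le> h * (2 * lam)" using lam0 by (simp add: pos_divide_le_eq)
      have "h * (2 * lam) = (4 * h)\<^sup>2" unfolding lam_def by (simp add: power2_eq_square)
      then have sqle: "(norm (z - x))\<^sup>2 \<le> (4 * h)\<^sup>2" using n2le by simp
      have h40: "0 \<le> 4 * h" using h0 by simp
      have zx: "norm (z - x) \<le> 4 * h" by (rule power2_le_imp_le[OF sqle h40])
      have zball: "norm (z - xbar) < R"
      proof -
        have n1: "norm (z - xbar) \<le> norm (z - x) + norm (x - xbar)"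
          using norm_triangle_ineq[of "z - x" "x - xbar"] by simp
        have n2: "norm (x - xbar) \<le> R / 2" using xc unfolding \<delta>_def by (simp add: dist_norm norm_minus_commute)
        show ?thesis using n1 n2 zx h4 by linarith
      qed
      have sle: "s \<le> t"
      proof -
        have "c * s powr \<alpha> \<le> c * t powr \<alpha>" using Phiz sq0 unfolding h_def by linarith
        then have st: "s powr \<alpha> \<le> t powr \<alpha>" using c by simp
        show ?thesis
        proof (rule ccontr)
          assume "\<not> s \<le> t"
          then have "t powr \<alpha> < s powr \<alpha>" using powr_less_mono2[OF al0 tge] by simp
          then show False using st by simp
        qed
      qed
      show ?thesis
      proof (cases "s = 0")
        case True
        have "0 \<in> limiting_subdiff FF z"
        proof (rule local_min_crit[OF zd])
          show "R - norm (z - xbar) > 0" using zball by simp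
          fix y assume "y \<in> ball z (R - norm (z - xbar))"
          moreover have "dist xbar y \<le> dist xbar z + dist z y" by (rule dist_triangle)
          moreover have "dist xbar z = norm (z - xbar)" by (simp add: dist_norm norm_minus_commute)
          ultimately have "dist xbar y < R" by simp
          then have "y \<in> cball xbar R" by simp
          then have "y \<in> ball xbar \<delta>2" using Rball by blast
          then show "FF z \<le> FF y" using lm2 FFz FFb True unfolding s_def by simp
        qed
        then have "infdist x ?S' \<le> dist x z" by (intro infdist_le) simp
        also have "\<dots> \<le> 4 * h" using zx by (simp add: dist_norm norm_minus_commute)
        finally have A: "infdist x ?S' \<le> 4 * c * t powr \<alpha>" unfolding h_def by simp
        show ?thesis using A tb unfolding d_def by linarith
      next
        case False
        then have spos: "s > 0" using sge by simp
        define P where "P = c * \<alpha> * s powr (\<alpha> - 1)"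
        have P0: "P > 0" unfolding P_def using c al0 spos by simp
        define v where "v = (1 / (lam * P)) *\<^sub>R (x - z)"
        have nv: "norm v = norm (x - z) / (lam * P)" unfolding v_def using lam0 P0 by simp
        have vfr: "v \<in> frechet_subdiff FF z"
          unfolding frechet_subdiff_def
        proof (intro CollectI conjI allI impI)
          show "\<bar>FF z\<bar> \<noteq> \<infinity>" using FFz by simp
          fix \<epsilon> :: real assume e: "\<epsilon> > 0"
          define K where "K = 2 * lam * P"
          have K0: "K > 0" unfolding K_def using lam0 P0 by simp
          have nv1: "norm v + 1 > 0" by (smt (verit) norm_ge_zero)
          define r0 where "r0 = min (R - norm (z - xbar)) (min (1 / (norm v + 1)) (K * \<epsilon>))"
          have r00: "r0 > 0" unfolding r0_def using zball K0 e nv1 by simp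
          show "\<exists>\<delta>>0. \<forall>y. norm (y - z) < \<delta> \<longrightarrow>
              ereal (real_of_ereal (FF z) + inner v (y - z) - \<epsilon> * norm (y - z)) \<le> FF y"
          proof (intro exI[of _ r0] conjI allI impI r00)
            fix y assume yz: "norm (y - z) < r0"
            have n1: "norm (y - xbar) \<le> norm (y - z) + norm (z - xbar)"
              using norm_triangle_ineq[of "y - z" "z - xbar"] by simp
            have "norm (y - z) < R - norm (z - xbar)" using yz unfolding r0_def by simp
            then have "norm (y - xbar) \<le> R" using n1 by linarith
            then have yR: "y \<in> cball xbar R" by (simp add: dist_norm norm_minus_commute)
            have rz: "real_of_ereal (FF z) = f z + G z" using FFz by simp
            show "ereal (real_of_ereal (FF z) + inner v (y - z) - \<epsilon> * norm (y - z)) \<le> FF y"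
            proof (cases "FF y \<le> ereal (f x + G x + 1)")
              case False
              have ny1: "norm (y - z) < 1 / (norm v + 1)" using yz unfolding r0_def by simp
              then have "(norm v + 1) * norm (y - z) < 1" using nv1 by (simp add: field_simps)
              moreover have "norm v * norm (y - z) \<le> (norm v + 1) * norm (y - z)" by (simp add: distrib_right)
              ultimately have "norm v * norm (y - z) < 1" by linarith
              moreover have "inner v (y - z) \<le> norm v * norm (y - z)"
                using Cauchy_Schwarz_ineq2[of v "y - z"] by simp
              moreover have "f z + G z \<le> f x + G x" using sle unfolding s_def t_def by simp
              moreover have "0 \<le> \<epsilon> * norm (y - z)" using e by simp
              ultimately have "f z + G z + inner v (y - z) - \<epsilon> * norm (y - z) < f x + G x + 1" by linarith
              then have Q1: "ereal (f z + G z + inner v (y - z) - \<epsilon> * norm (y - z)) \<le> ereal (f x + G x + 1)" by simp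
              have Q2: "ereal (f x + G x + 1) \<le> FF y" using False by simp
              show ?thesis unfolding rz by (rule order_trans[OF Q1 Q2])
            next
              case True
              then have yD: "y \<in> D" unfolding D_def using yR by simp
              have yd: "y \<in> edom g" using yD Dd by auto
              have FFy: "FF y = ereal (f y + G y)" using FF_dom[OF yd] .
              define sy where "sy = f y + G y - Fb"
              have sy0: "sy \<ge> 0" using geD[OF yD] unfolding sy_def by simp
              have Pyz: "c * s powr \<alpha> + (norm (z - x))\<^sup>2 / (2 * lam) \<le> c * sy powr \<alpha> + (norm (y - x))\<^sup>2 / (2 * lam)"
                using zmin[OF yD] unfolding \<Phi>_def s_def sy_def by simp
              have conc: "sy powr \<alpha> \<le> s powr \<alpha> + \<alpha> * s powr (\<alpha> - 1) * (sy - s)"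
                by (rule powr_concave[OF al0 al1 sy0 spos])
              then have "c * sy powr \<alpha> \<le> c * s powr \<alpha> + P * (sy - s)"
                unfolding P_def using c by (smt (verit, ccfv_SIG) mult.assoc distrib_left mult_left_mono)
              then have "(norm (z - x))\<^sup>2 / (2 * lam) - (norm (y - x))\<^sup>2 / (2 * lam) \<le> P * (sy - s)"
                using Pyz by linarith
              then have "((norm (z - x))\<^sup>2 - (norm (y - x))\<^sup>2) / (2 * lam) \<le> P * (sy - s)"
                by (simp add: diff_divide_distrib)
              then have E1: "(norm (z - x))\<^sup>2 - (norm (y - x))\<^sup>2 \<le> K * (sy - s)"
                using lam0 unfolding K_def by (simp add: pos_divide_le_eq ac_simps)
              define ip where "ip = inner (x - z) (y - z)"
              have E2: "(norm (z - x))\<^sup>2 - (norm (y - x))\<^sup>2 = 2 * ip - (norm (y - z))\<^sup>2"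
              proof -
                have "y - x = (y - z) - (x - z)" by simp
                then have "(norm (y - x))\<^sup>2 = (norm (y - z))\<^sup>2 - 2 * ip + (norm (x - z))\<^sup>2"
                  unfolding ip_def by (simp only: power2_norm_eq_inner inner_diff_left inner_diff_right inner_commute) 
                    (simp add: inner_commute algebra_simps)
                moreover have "norm (z - x) = norm (x - z)" by (rule norm_minus_commute)
                ultimately show ?thesis by simp
              qed
              have E3: "(norm (y - z))\<^sup>2 \<le> K * \<epsilon> * norm (y - z)"
              proof -
                have "norm (y - z) \<le> K * \<epsilon>" using yz unfolding r0_def by simp
                then show ?thesis unfolding power2_eq_square by (intro mult_right_mono) auto
              qed
              have "2 * ip - K * \<epsilon> * norm (y - z) \<le> K * (sy - s)" using E1 E2 E3 by linarith
              then have E4: "(2 * ip - K * \<epsilon> * norm (y - z)) / K \<le> sy - s"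
                using K0 by (simp add: pos_divide_le_eq ac_simps)
              have iv: "inner v (y - z) = ip / (lam * P)"
                unfolding v_def ip_def inner_scaleR_left by simp
              have "(2 * ip - K * \<epsilon> * norm (y - z)) / K = ip / (lam * P) - \<epsilon> * norm (y - z)"
                unfolding K_def using lam0 P0 by (simp add: field_simps)
              then have "(2 * ip - K * \<epsilon> * norm (y - z)) / K = inner v (y - z) - \<epsilon> * norm (y - z)"
                using iv by simp
              then have "f z + G z + inner v (y - z) - \<epsilon> * norm (y - z) \<le> f y + G y"
                using E4 unfolding sy_def s_def by simp
              then show ?thesis using rz FFy by simp
            qed
          qed
        qed
        have KLz: "c * (1 - \<theta>) * (real_of_ereal (FF z - FF xbar)) powr (- \<theta>) * infdist 0 (limiting_subdiff FF z) \<ge> 1"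
        proof (rule KLp)
          show "z \<in> cball xbar \<delta>1" using zball Rd1 by (simp add: dist_norm norm_minus_commute)
          show "FF xbar < FF z" using spos FFz FFb unfolding s_def by simp
          have "ereal (f z + G z) < ereal Fb + ereal \<tau>0" using sle tlt unfolding s_def \<tau>1_def by simp
          also have "\<dots> \<le> ereal Fb + w" using t0 by (intro add_left_mono) simp
          finally show "FF z < FF xbar + w" using FFz FFb by simp
          show "limiting_subdiff FF z \<noteq> {}" using frechet_limiting[OF vfr] by blast
        qed
        have "real_of_ereal (FF z - FF xbar) = s" using FFz FFb unfolding s_def by simp
        then have "c * (1 - \<theta>) * (real_of_ereal (FF z - FF xbar)) powr (- \<theta>) = P"
          unfolding P_def \<alpha>_def by simp
        moreover have "infdist 0 (limiting_subdiff FF z) \<le> norm v"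
          using infdist_le[OF frechet_limiting[OF vfr], of 0] by simp
        ultimately have "1 \<le> P * norm v" using KLz P0 by (smt (verit) mult_left_mono)
        then have "lam \<le> norm (x - z)" using nv P0 lam0 by (simp add: field_simps)
        then have False using zx h0 unfolding lam_def by (simp add: norm_minus_commute)
        then show ?thesis ..
      qed
    qed
  qed
  show ?thesis unfolding q_subregular_def using x0 ka0 dl0 main by blast
qed

lemma part1:
  assumes xb: "xbar \<in> edom g" and x0: "0 \<in> limiting_subdiff FF xbar" and qp: "q > 0"
    and th: "max (1 / (2 * q)) (1 / (1 + q)) < 1"
    and loc: "\<forall>x'\<in>S. \<exists>\<epsilon>>0. \<forall>y\<in>S \<inter> cball x' \<epsilon>. FF y \<le> FF x'"
    and Sdef: "S = {x \<in> edom g. 0 \<in> limiting_subdiff FF x}"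
    and sr: "q_subregular (limiting_subdiff FF) q xbar 0"
  shows "KL_exponent FF (max (1 / (2 * q)) (1 / (1 + q))) xbar"
proof -
  define \<theta> where "\<theta> = max (1 / (2 * q)) (1 / (1 + q))"
  have th0: "\<theta> > 0" unfolding \<theta>_def using qp by (simp add: less_max_iff_disj)
  have th1: "\<theta> < 1" using th unfolding \<theta>_def .
  have tha: "1 / (2 * q) \<le> \<theta>" and thb: "1 / (1 + q) \<le> \<theta>" unfolding \<theta>_def by auto
  define e where "e = 1 / \<theta>"
  have e2q: "e \<le> 2 * q" unfolding e_def using tha th0 qp by (simp add: field_simps)
  have e1q: "e \<le> 1 + q" unfolding e_def using thb th0 qp by (simp add: field_simps)
  have eth: "e * \<theta> = 1" unfolding e_def using th0 by simp
  obtain \<kappa> \<delta>s where ka: "\<kappa> > 0" and ds: "\<delta>s > 0" and SR: "\<And>x. x \<in> cball xbar \<delta>s \<Longrightarrow>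
      limiting_subdiff FF x \<noteq> {} \<Longrightarrow>
      infdist x {z. 0 \<in> limiting_subdiff FF z} \<le> \<kappa> * (infdist 0 (limiting_subdiff FF x)) powr q"
    using sr unfolding q_subregular_def by blast
  have xbS: "xbar \<in> S" using xb x0 Sdef by simp
  obtain \<epsilon>0 where e0: "\<epsilon>0 > 0" and LOC: "\<And>y. y \<in> S \<Longrightarrow> y \<in> cball xbar \<epsilon>0 \<Longrightarrow> FF y \<le> FF xbar"
    using loc xbS by blast
  have xbU: "xbar \<in> U" using xb domU by auto
  obtain r L where r: "r > 0" and L: "L \<ge> 0" and rU: "cball xbar r \<subseteq> U" and
    QB: "\<And>x z. x \<in> cball xbar r \<Longrightarrow> z \<in> cball xbar r \<Longrightarrow> \<bar>f z - f x - Df x (z - x)\<bar> \<le> L * (norm (z - x))\<^sup>2"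
    using quad_bound[OF xbU] by blast
  define m where "m = min \<epsilon>0 r"
  have m0: "m > 0" unfolding m_def using e0 r by simp
  define \<eta> where "\<eta> = min 1 ((m / (4 * \<kappa>)) powr (1 / q))"
  have eta0: "\<eta> > 0" unfolding \<eta>_def using m0 ka by simp
  have eta1: "\<eta> \<le> 1" unfolding \<eta>_def by simp
  have etab: "2 * \<kappa> * a powr q \<le> m / 2" if "0 \<le> a" "a \<le> \<eta>" for a
  proof -
    have "a powr q \<le> ((m / (4 * \<kappa>)) powr (1 / q)) powr q"
      using that qp unfolding \<eta>_def by (intro powr_mono2) auto
    also have "\<dots> = m / (4 * \<kappa>)" using qp m0 ka by (simp add: powr_powr)
    finally show ?thesis using ka by (simp add: field_simps)
  qed
  define \<delta> where "\<delta> = min \<delta>s (min (\<epsilon>0 / 2) (r / 2))"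
  have dl0: "\<delta> > 0" unfolding \<delta>_def using ds e0 r by simp
  define Cc where "Cc = 4 * L * \<kappa>\<^sup>2 + 2 * \<kappa>"
  have Cc0: "Cc \<ge> 0" unfolding Cc_def using L ka by simp
  define C1 where "C1 = max (1 / \<eta>) (Cc powr \<theta>)"
  have C1a: "C1 \<ge> 1 / \<eta>" and C1b: "C1 \<ge> Cc powr \<theta>" unfolding C1_def by auto
  have C10: "C1 > 0" using C1a eta0 by (smt (verit) divide_pos_pos)
  define c where "c = C1 / (1 - \<theta>)"
  have c0: "c > 0" unfolding c_def using C10 th1 by simp
  define Fb where "Fb = f xbar + G xbar"
  have FFb: "FF xbar = ereal Fb" unfolding Fb_def using FF_dom[OF xb] .
  have KLx: "c * (1 - \<theta>) * (real_of_ereal (FF x - FF xbar)) powr (- \<theta>) * infdist 0 (limiting_subdiff FF x) \<ge> 1"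
    if xc: "x \<in> cball xbar \<delta>" and lt1: "FF xbar < FF x" and lt2: "FF x < FF xbar + ereal 1"
      and ne: "limiting_subdiff FF x \<noteq> {}" for x
  proof -
    have xr: "x \<in> cball xbar r" using xc r unfolding \<delta>_def by auto
    have xU: "x \<in> U" using xr rU by auto
    have xd: "x \<in> edom g" using ne limiting_convex[OF _ xU] by blast
    have FFx: "FF x = ereal (f x + G x)" using FF_dom[OF xd] .
    define t where "t = f x + G x - Fb"
    have tpos: "t > 0" and tl1: "t < 1" using lt1 lt2 FFx FFb unfolding t_def by auto
    have rt: "real_of_ereal (FF x - FF xbar) = t" using FFx FFb unfolding t_def by simp
    have claim: "t powr \<theta> \<le> C1 * norm \<xi>" if xi: "\<xi> \<in> limiting_subdiff FF x" for \<xi>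
    proof -
      have conv: "\<And>y. y \<in> edom g \<Longrightarrow> G x + inner \<xi> (y - x) - Df x (y - x) \<le> G y"
        using limiting_convex[OF xi xU] by blast
      consider "\<xi> = 0" | "norm \<xi> \<ge> \<eta>" | "\<xi> \<noteq> 0" "norm \<xi> < \<eta>" by force
      then show ?thesis
      proof cases
        case 1
        then have "x \<in> S" using xi xd Sdef by simp
        moreover have "x \<in> cball xbar \<epsilon>0" using xc e0 unfolding \<delta>_def by auto
        ultimately have "FF x \<le> FF xbar" using LOC by blast
        then show ?thesis using lt1 by simp
      next
        case 2
        have "t powr \<theta> \<le> 1" using tpos tl1 th0 by (intro powr_le1) auto
        also have "1 \<le> (1 / \<eta>) * norm \<xi>" using 2 eta0 by (simp add: field_simps)
        also have "\<dots> \<le> C1 * norm \<xi>" using C1a by (intro mult_right_mono) auto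
        finally show ?thesis .
      next
        case 3
        define a where "a = norm \<xi>"
        have a0: "a > 0" and aeta: "a < \<eta>" using 3 unfolding a_def by auto
        have a1: "a < 1" using aeta eta1 by simp
        have "infdist 0 (limiting_subdiff FF x) \<le> dist 0 \<xi>" by (rule infdist_le[OF xi])
        then have "infdist 0 (limiting_subdiff FF x) powr q \<le> a powr q"
          unfolding a_def using qp infdist_nonneg by (intro powr_mono2) auto
        then have "infdist x {z. 0 \<in> limiting_subdiff FF z} \<le> \<kappa> * a powr q"
          using SR[OF _ ne] xc ka unfolding \<delta>_def by (smt (verit) mem_cball min.bounded_iff mult_left_mono)
        also have "\<dots> < 2 * \<kappa> * a powr q" using ka a0 by simp
        finally obtain z where zS': "0 \<in> limiting_subdiff FF z" and dz: "dist x z < 2 * \<kappa> * a powr q"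
          using infdist_lessE[of "{z. 0 \<in> limiting_subdiff FF z}"] x0 by blast
        have rho: "2 * \<kappa> * a powr q \<le> m / 2" using etab a0 aeta by simp
        have "dist xbar z \<le> dist xbar x + dist x z" by (rule dist_triangle)
        moreover have "dist xbar x \<le> min (\<epsilon>0 / 2) (r / 2)" using xc unfolding \<delta>_def by simp
        ultimately have dxz: "dist xbar z < r" "dist xbar z \<le> \<epsilon>0" using dz rho unfolding m_def by auto
        have zr: "z \<in> cball xbar r" using dxz by simp
        have zd: "z \<in> edom g" using limiting_convex[OF zS'] zr rU by auto
        have "z \<in> S" using zd zS' Sdef by simp
        then have "FF z \<le> FF xbar" using LOC dxz by simp
        then have Fz: "f z + G z \<le> Fb" using FF_dom[OF zd] FFb by simp
        have cz: "G x + inner \<xi> (z - x) - Df x (z - x) \<le> G z" using conv[OF zd] .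
        have qb: "\<bar>f z - f x - Df x (z - x)\<bar> \<le> L * (norm (z - x))\<^sup>2" using QB[OF xr zr] .
        have cs: "- inner \<xi> (z - x) \<le> a * norm (z - x)"
          unfolding a_def using Cauchy_Schwarz_ineq2[of \<xi> "z - x"] by simp
        define \<rho> where "\<rho> = 2 * \<kappa> * a powr q"
        have nzx: "norm (z - x) \<le> \<rho>" using dz unfolding \<rho>_def by (simp add: dist_norm norm_minus_commute)
        have "t \<le> L * (norm (z - x))\<^sup>2 + a * norm (z - x)"
          using Fz cz qb cs unfolding t_def by linarith
        also have "\<dots> \<le> L * \<rho>\<^sup>2 + a * \<rho>"
          using nzx L a0 by (intro add_mono mult_left_mono power_mono) auto
        also have "L * \<rho>\<^sup>2 = 4 * L * \<kappa>\<^sup>2 * a powr (2 * q)"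
          unfolding \<rho>_def using a0 by (simp add: power2_eq_square powr_add[symmetric] algebra_simps)
        also have "a * \<rho> = 2 * \<kappa> * a powr (1 + q)"
          unfolding \<rho>_def using a0 by (simp add: powr_add)
        also have "4 * L * \<kappa>\<^sup>2 * a powr (2 * q) + 2 * \<kappa> * a powr (1 + q) \<le> Cc * a powr e"
        proof -
          have "a powr (2 * q) \<le> a powr e" using powr_mono'[OF e2q] a0 a1 by simp
          moreover have "a powr (1 + q) \<le> a powr e" using powr_mono'[OF e1q] a0 a1 by simp
          ultimately show ?thesis unfolding Cc_def using L ka
            by (simp add: distrib_right) (intro add_mono mult_left_mono; simp)
        qed
        finally have tC: "t \<le> Cc * a powr e" .
        have "t powr \<theta> \<le> (Cc * a powr e) powr \<theta>" using tC tpos th0 by (intro powr_mono2) auto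
        also have "\<dots> = Cc powr \<theta> * a" using Cc0 a0 eth by (simp add: powr_mult powr_powr)
        also have "\<dots> \<le> C1 * a" using C1b a0 by (intro mult_right_mono) auto
        finally show ?thesis unfolding a_def .
      qed
    qed
    have "t powr \<theta> / C1 \<le> infdist 0 (limiting_subdiff FF x)"
    proof (rule infdist_geI[OF ne])
      fix \<xi> assume "\<xi> \<in> limiting_subdiff FF x"
      then show "t powr \<theta> / C1 \<le> dist 0 \<xi>" using claim C10 by (simp add: field_simps)
    qed
    then have M: "c * (1 - \<theta>) * t powr (- \<theta>) * (t powr \<theta> / C1) \<le> c * (1 - \<theta>) * t powr (- \<theta>) * infdist 0 (limiting_subdiff FF x)"
      using c0 th1 by (intro mult_left_mono) auto
    have E: "c * (1 - \<theta>) * t powr (- \<theta>) * (t powr \<theta> / C1) = 1"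
      unfolding c_def using th1 C10 tpos by (simp add: powr_minus field_simps)
    have "1 \<le> c * (1 - \<theta>) * t powr (- \<theta>) * infdist 0 (limiting_subdiff FF x)" using M E by linarith
    then show ?thesis unfolding rt .
  qed
  show ?thesis unfolding KL_exponent_def \<theta>_def[symmetric]
    using th0 th1 x0 dl0 c0 KLx by (intro conjI exI[of _ \<delta>] exI[of _ "ereal 1"] exI[of _ c]) auto
qed

end

theorem proposition2p6:
  fixes A :: "real^'n^'m" and b :: "real^'m"
    and \<psi> :: "real^'m \<Rightarrow> ereal" and g :: "real^'n \<Rightarrow> ereal"
    and F :: "real^'n \<Rightarrow> ereal" and S :: "(real^'n) set"
    and xbar :: "real^'n" and q :: real
  assumes psi_proper: "proper_fun \<psi>" and psi_lsc: "lsc_fun \<psi>"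
    and g_proper: "proper_fun g" and g_lsc: "lsc_fun g"
    and F_def: "F = (\<lambda>x. \<psi> (A *v x - b) + g x)"
    and smooth: "\<exists>U V. open U \<and> edom g \<subseteq> U \<and> open V \<and> (\<lambda>x. A *v x - b) ` U \<subseteq> V \<and>
        (\<exists>p gp H. (\<forall>y\<in>V. \<psi> y = ereal (p y)) \<and>
           (\<forall>y\<in>V. (p has_derivative (\<lambda>h. inner (gp y) h)) (at y)) \<and>
           (\<forall>y\<in>V. (gp has_derivative (\<lambda>h. H y *v h)) (at y)) \<and> continuous_on V H)"
    and g_convex: "convex (edom g)" and g_convex_on: "convex_on (edom g) (\<lambda>x. real_of_ereal (g x))"
    and g_cont: "continuous_on (edom g) g"
    and F_lb: "(INF x. F x) > -\<infinity>"
    and F_level_bdd: "\<forall>\<alpha>::real. bounded {x. F x \<le> ereal \<alpha>}"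
    and S_def: "S = {x \<in> edom g. 0 \<in> limiting_subdiff F x}"
    and xbar_S: "xbar \<in> S" and q_pos: "q > 0"
  shows "(max (1 / (2 * q)) (1 / (1 + q)) < 1 \<and> (\<forall>x'\<in>S. \<exists>\<epsilon>>0. \<forall>y\<in>S \<inter> cball x' \<epsilon>. F y \<le> F x') \<and>
            q_subregular (limiting_subdiff F) q xbar 0
          \<longrightarrow> KL_exponent F (max (1 / (2 * q)) (1 / (1 + q))) xbar)
       \<and> (1/2 < q \<and> q \<le> 1 \<and> KL_exponent F (1 / (2 * q)) xbar \<and>
            (\<exists>\<delta>>0. \<forall>x\<in>ball xbar \<delta>. F xbar \<le> F x)
          \<longrightarrow> q_subregular (limiting_subdiff F) (2 * q - 1) xbar 0)"
  proof -
  obtain U V p gp H where U: "open U" "edom g \<subseteq> U" and V: "open V" "(\<lambda>x. A *v x - b) ` U \<subseteq> V"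
    and pp: "\<forall>y\<in>V. \<psi> y = ereal (p y)" and pd: "\<forall>y\<in>V. (p has_derivative (\<lambda>h. inner (gp y) h)) (at y)"
    and gd: "\<forall>y\<in>V. (gp has_derivative (\<lambda>h. H y *v h)) (at y)" and Hc: "continuous_on V H"
    using smooth by blast
  interpret st: setting A b \<psi> g U V p gp H
  proof
    show "\<And>y. \<psi> y \<noteq> - \<infinity>" using psi_proper unfolding proper_fun_def by blast
    show "\<And>x. g x \<noteq> - \<infinity>" using g_proper unfolding proper_fun_def by blast
  qed (use psi_lsc g_lsc U V pp pd gd Hc g_convex g_convex_on g_cont in auto)
  have FFeq: "F = st.FF" unfolding F_def by (rule ext) (simp add: st.FF_def)
  have xb: "xbar \<in> edom g" and x0: "0 \<in> limiting_subdiff F xbar" using xbar_S S_def by auto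
  show ?thesis
  proof (intro conjI impI)
    assume H1: "max (1 / (2 * q)) (1 / (1 + q)) < 1 \<and> (\<forall>x'\<in>S. \<exists>\<epsilon>>0. \<forall>y\<in>S \<inter> cball x' \<epsilon>. F y \<le> F x') \<and>
            q_subregular (limiting_subdiff F) q xbar 0"
    show "KL_exponent F (max (1 / (2 * q)) (1 / (1 + q))) xbar"
      using st.part1[OF xb x0[unfolded FFeq] q_pos, of S] H1 S_def unfolding FFeq by blast
  next
    assume H2: "1/2 < q \<and> q \<le> 1 \<and> KL_exponent F (1 / (2 * q)) xbar \<and> (\<exists>\<delta>>0. \<forall>x\<in>ball xbar \<delta>. F xbar \<le> F x)"
    show "q_subregular (limiting_subdiff F) (2 * q - 1) xbar 0"
      using st.part2[OF xb, of q] H2 x0 unfolding FFeq by blast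
  qed
qed

end
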